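(* Let $(\Omega,\mathcal A)$ be a measurable space and let $K\subset\mathbb C^n$ be a compact set. Then $R_\Omega^{unif}(K)=R_\Omega(K)$.
   Context: A random function $f:\Omega\times X\to\mathbb C$ (with $X$ any set) is a function such that $f(\cdot,x)$ is measurable (with respect to $\mathcal A$ and the Borel sets of $\mathbb C$) for every $x\in X$. A random rational function with no poles on $K$ is a function $r(\omega,z)$ such that for each $\omega$, $r(\omega,\cdot)$ is a rational function on $\mathbb C^n$ with no poles on $K$, and $r(\cdot,z)$ is measurable for each $z$. Consider random functions $f:\Omega\times K\to\mathbb C$ such that $f(\omega,\cdot)$ is continuous on $K$ and holomorphic on the interior of $K$ for every $\omega$. Such an $f$ belongs to $R_\Omega(K)$ if there is a sequence $r_j$ of random rational functions with no poles on $K$ such that for every $\omega\in\Omega$, $r_j(\omega,\cdot)\to f(\omega,\cdot)$ uniformly on $K$. Such an $f$ belongs to $R_\Omega^{unif}(K)$ if for every $\varepsilon>0$ there is a random rational function $r$ with no poles on $K$ such that $|r(\omega,z)-f(\omega,z)|<\varepsilon$ for all $(\omega,z)\in\Omega\times K$. *)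

theory Defs
  imports "HOL-Analysis.Analysis" "HOL-Probability.Probability"
begin

definition poly_fun :: "(complex^'n \<Rightarrow> complex) \<Rightarrow> bool" where
  "poly_fun p \<longleftrightarrow> (\<exists>(A :: ('n \<Rightarrow> nat) set) c. finite A \<and>
      (\<forall>z. p z = (\<Sum>\<alpha>\<in>A. c \<alpha> * (\<Prod>i\<in>UNIV. (z $ i) ^ (\<alpha> i)))))"

definition rat_no_poles :: "(complex^'n) set \<Rightarrow> (complex^'n \<Rightarrow> complex) \<Rightarrow> bool" where
  "rat_no_poles K r \<longleftrightarrow> (\<exists>p q. poly_fun p \<and> poly_fun q \<and> (\<forall>z\<in>K. q z \<noteq> 0) \<and>
      (\<forall>z. q z \<noteq> 0 \<longrightarrow> r z = p z / q z))"

definition random_rat :: "'a measure \<Rightarrow> (complex^'n) set \<Rightarrow> ('a \<Rightarrow> complex^'n \<Rightarrow> complex) \<Rightarrow> bool" where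
  "random_rat M K r \<longleftrightarrow> (\<forall>\<omega>\<in>space M. rat_no_poles K (r \<omega>)) \<and>
      (\<forall>z. (\<lambda>\<omega>. r \<omega> z) \<in> borel_measurable M)"

definition holo_on :: "(complex^'n) set \<Rightarrow> (complex^'n \<Rightarrow> complex) \<Rightarrow> bool" where
  "holo_on U g \<longleftrightarrow> (\<forall>z\<in>U. \<exists>L. (g has_derivative L) (at z) \<and>
      (\<forall>c w. L (c *s w) = c * L w))"

definition random_cont_holo :: "'a measure \<Rightarrow> (complex^'n) set \<Rightarrow> ('a \<Rightarrow> complex^'n \<Rightarrow> complex) \<Rightarrow> bool" where
  "random_cont_holo M K f \<longleftrightarrow> (\<forall>z\<in>K. (\<lambda>\<omega>. f \<omega> z) \<in> borel_measurable M) \<and>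
      (\<forall>\<omega>\<in>space M. continuous_on K (f \<omega>) \<and> holo_on (interior K) (f \<omega>))"

definition R_Omega :: "'a measure \<Rightarrow> (complex^'n) set \<Rightarrow> ('a \<Rightarrow> complex^'n \<Rightarrow> complex) set" where
  "R_Omega M K = {f. random_cont_holo M K f \<and>
      (\<exists>r :: nat \<Rightarrow> 'a \<Rightarrow> complex^'n \<Rightarrow> complex. (\<forall>j. random_rat M K (r j)) \<and>
         (\<forall>\<omega>\<in>space M. uniform_limit K (\<lambda>j. r j \<omega>) (f \<omega>) sequentially))}"

definition R_Omega_unif :: "'a measure \<Rightarrow> (complex^'n) set \<Rightarrow> ('a \<Rightarrow> complex^'n \<Rightarrow> complex) set" where
  "R_Omega_unif M K = {f. random_cont_holo M K f \<and>
      (\<forall>\<epsilon>>0. \<exists>r. random_rat M K r \<and>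
         (\<forall>\<omega>\<in>space M. \<forall>z\<in>K. norm (r \<omega> z - f \<omega> z) < \<epsilon>))}"

end

theory Submission
  imports Defs
begin

lemma poly_fun_cont:
  fixes p :: "complex^'n \<Rightarrow> complex"
  assumes "poly_fun p" shows "continuous_on S p"
proof -
  obtain A c where A: "\<forall>z. p z = (\<Sum>\<alpha>\<in>(A :: ('n \<Rightarrow> nat) set). c \<alpha> * (\<Prod>i\<in>UNIV. (z $ i) ^ (\<alpha> i)))"
    using assms unfolding poly_fun_def by blast
  have "p = (\<lambda>z. \<Sum>\<alpha>\<in>A. c \<alpha> * (\<Prod>i\<in>UNIV. (z $ i) ^ (\<alpha> i)))" using A by auto
  moreover have "continuous_on S (\<lambda>z::complex^'n. \<Sum>\<alpha>\<in>A. c \<alpha> * (\<Prod>i\<in>UNIV. (z $ i) ^ (\<alpha> i)))"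
    by (intro continuous_on_sum continuous_on_mult continuous_on_const continuous_on_prod continuous_on_power continuous_on_component continuous_on_id)
  ultimately show ?thesis by simp
qed

lemma rat_cont:
  assumes "rat_no_poles K r" shows "continuous_on K r"
proof -
  obtain p q where pq: "poly_fun p" "poly_fun q" "\<forall>z\<in>K. q z \<noteq> 0" "\<forall>z. q z \<noteq> 0 \<longrightarrow> r z = p z / q z"
    using assms unfolding rat_no_poles_def by blast
  have cp: "continuous_on K p" by (rule poly_fun_cont[OF pq(1)])
  have cq: "continuous_on K q" by (rule poly_fun_cont[OF pq(2)])
  have "continuous_on K (\<lambda>z. p z / q z)"
    by (rule continuous_on_divide[OF cp cq]) (use pq(3) in blast)
  moreover have "\<And>z. z \<in> K \<Longrightarrow> p z / q z = r z" using pq(3,4) by simp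
  ultimately show ?thesis by (rule continuous_on_eq)
qed

theorem theorem3p1:
  fixes M :: "'a measure" and K :: "(complex^'n) set"
  assumes "compact K"
  shows "R_Omega_unif M K = R_Omega M K"
proof
  show "R_Omega_unif M K \<subseteq> R_Omega M K"
  proof
    fix f assume f: "f \<in> R_Omega_unif M K"
    have "\<forall>j::nat. \<exists>r. random_rat M K r \<and> (\<forall>\<omega>\<in>space M. \<forall>z\<in>K. norm (r \<omega> z - f \<omega> z) < 1 / Suc j)"
    proof
      fix j :: nat
      have "(1::real) / Suc j > 0" by simp
      then show "\<exists>r. random_rat M K r \<and> (\<forall>\<omega>\<in>space M. \<forall>z\<in>K. norm (r \<omega> z - f \<omega> z) < 1 / Suc j)"
        using f unfolding R_Omega_unif_def by blast
    qed
    then obtain r where rr: "\<forall>j. random_rat M K (r j) \<and> (\<forall>\<omega>\<in>space M. \<forall>z\<in>K. norm (r j \<omega> z - f \<omega> z) < 1 / Suc j)"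
      by (rule choice[THEN exE])
    then have r: "\<And>j. random_rat M K (r j)"
      "\<And>j \<omega> z. \<omega> \<in> space M \<Longrightarrow> z \<in> K \<Longrightarrow> norm (r j \<omega> z - f \<omega> z) < 1 / Suc j"
      by blast+
    have "uniform_limit K (\<lambda>j. r j \<omega>) (f \<omega>) sequentially" if "\<omega> \<in> space M" for \<omega>
    proof (rule uniform_limitI)
      fix e :: real assume "e > 0"
      then obtain N :: nat where N: "1 / Suc N < e"
        using nat_approx_posE by blast
      show "\<forall>\<^sub>F n in sequentially. \<forall>x\<in>K. dist (r n \<omega> x) (f \<omega> x) < e"
      proof (rule eventually_sequentiallyI[of N])
        fix n assume "N \<le> n"
        then have "1 / Suc n \<le> 1 / Suc N"
          by (simp add: frac_le)
        show "\<forall>x\<in>K. dist (r n \<omega> x) (f \<omega> x) < e"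
        proof
          fix x assume "x \<in> K"
          then have "norm (r n \<omega> x - f \<omega> x) < 1 / Suc n" using r(2)[OF that] by blast
          then show "dist (r n \<omega> x) (f \<omega> x) < e"
            unfolding dist_norm using N \<open>1 / Suc n \<le> 1 / Suc N\<close> by linarith
        qed
      qed
    qed
    then show "f \<in> R_Omega M K"
      using f r(1) unfolding R_Omega_unif_def R_Omega_def by blast
  qed
next
  show "R_Omega M K \<subseteq> R_Omega_unif M K"
  proof
    fix f assume f: "f \<in> R_Omega M K"
    then have fc: "random_cont_holo M K f" unfolding R_Omega_def by blast
    obtain r :: "nat \<Rightarrow> 'a \<Rightarrow> complex^'n \<Rightarrow> complex" where
      r: "\<And>j. random_rat M K (r j)" "\<And>\<omega>. \<omega>\<in>space M \<Longrightarrow> uniform_limit K (\<lambda>j. r j \<omega>) (f \<omega>) sequentially"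
      using f unfolding R_Omega_def by blast
    obtain D where D: "countable D" "D \<subseteq> K" "K \<subseteq> closure D"
      using separable by blast
    have clD: "closure D = K"
    proof (rule subset_antisym)
      show "closure D \<subseteq> K" using D(2) assms by (simp add: closure_minimal compact_imp_closed)
    qed (rule D(3))
    have fmeas: "\<And>z. z \<in> K \<Longrightarrow> (\<lambda>\<omega>. f \<omega> z) \<in> borel_measurable M"
      using fc unfolding random_cont_holo_def by blast
    have rmeas: "\<And>j z. (\<lambda>\<omega>. r j \<omega> z) \<in> borel_measurable M"
      using r(1) unfolding random_rat_def by blast
    have "\<exists>R. random_rat M K R \<and> (\<forall>\<omega>\<in>space M. \<forall>z\<in>K. norm (R \<omega> z - f \<omega> z) < e)"
      if e: "e > 0" for e :: real
    proof -
      define P where "P j \<omega> \<longleftrightarrow> (\<forall>z\<in>D. norm (r j \<omega> z - f \<omega> z) \<le> e / 2)" for j \<omega>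
      define N where "N \<omega> = (LEAST j. P j \<omega>)" for \<omega>
      define R where "R \<omega> = r (N \<omega>) \<omega>" for \<omega>
      have Pset: "{\<omega>\<in>space M. P j \<omega>} \<in> sets M" for j
        unfolding P_def
      proof (rule sets.sets_Collect_countable_All'[OF _ D(1)])
        fix z assume "z \<in> D"
        then have fz[measurable]: "(\<lambda>\<omega>. f \<omega> z) \<in> borel_measurable M" using fmeas D(2) by auto
        have rz[measurable]: "(\<lambda>\<omega>. r j \<omega> z) \<in> borel_measurable M" by (rule rmeas)
        have "(\<lambda>\<omega>. norm (r j \<omega> z - f \<omega> z)) \<in> borel_measurable M"
          by measurable
        then show "{\<omega> \<in> space M. norm (r j \<omega> z - f \<omega> z) \<le> e / 2} \<in> sets M"
          using measurable_sets[OF _ atMost_borel, of _ M "e / 2"]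
          by (simp add: vimage_def Int_def conj_commute)
      qed
      have Nmeas: "N \<in> measurable M (count_space UNIV)"
        unfolding N_def
      proof (rule measurable_Least)
        fix j
        show "(\<lambda>x. P j x) \<in> measurable M (count_space UNIV)"
          using Pset by (simp add: pred_def)
      qed
      have Rmeas: "(\<lambda>\<omega>. R \<omega> z) \<in> borel_measurable M" for z
        unfolding R_def by (rule measurable_compose_countable[OF rmeas Nmeas])
      have close: "\<forall>z\<in>K. norm (R \<omega> z - f \<omega> z) < e" if \<omega>: "\<omega> \<in> space M" for \<omega>
      proof -
        have "\<forall>\<^sub>F n in sequentially. \<forall>x\<in>K. dist (r n \<omega> x) (f \<omega> x) < e / 2"
          using r(2)[OF \<omega>] half_gt_zero[OF e] unfolding uniform_limit_iff by blast
        then obtain j where "\<forall>x\<in>K. dist (r j \<omega> x) (f \<omega> x) < e / 2"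
          unfolding eventually_sequentially by blast
        then have "P j \<omega>" unfolding P_def
        proof (intro ballI)
          fix z assume H: "\<forall>x\<in>K. dist (r j \<omega> x) (f \<omega> x) < e / 2" and z: "z \<in> D"
          then have "dist (r j \<omega> z) (f \<omega> z) < e / 2" using D(2) by blast
          then show "norm (r j \<omega> z - f \<omega> z) \<le> e / 2" by (simp add: dist_norm)
        qed
        then have PN: "P (N \<omega>) \<omega>" unfolding N_def by (rule LeastI)
        have cont: "continuous_on (closure D) (\<lambda>z. r (N \<omega>) \<omega> z - f \<omega> z)"
        proof -
          have "rat_no_poles K (r (N \<omega>) \<omega>)" using r(1) \<omega> by (auto simp: random_rat_def)
          moreover have "continuous_on K (f \<omega>)" using fc \<omega> by (auto simp: random_cont_holo_def)
          ultimately show ?thesis unfolding clD by (intro continuous_on_diff rat_cont[of K "r (N \<omega>) \<omega>"])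
        qed
        show ?thesis
        proof
          fix z assume "z \<in> K"
          have "norm ((\<lambda>z. r (N \<omega>) \<omega> z - f \<omega> z) z) \<le> e / 2"
          proof (rule continuous_on_closure_norm_le[OF cont])
            show "\<forall>y\<in>D. norm (r (N \<omega>) \<omega> y - f \<omega> y) \<le> e / 2" using PN unfolding P_def .
            show "z \<in> closure D" using \<open>z \<in> K\<close> clD by simp
          qed
          then show "norm (R \<omega> z - f \<omega> z) < e" using e unfolding R_def by simp
        qed
      qed
      have "random_rat M K R"
        using r(1) Rmeas unfolding random_rat_def R_def by auto
      then show ?thesis using close by blast
    qed
    then show "f \<in> R_Omega_unif M K"
      using fc unfolding R_Omega_unif_def by blast
  qed
qed

end
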